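(* Let $D\ge 1$. Any (randomized) voting rule that has access only to the top-$t$ prefix of each agent's ranking and achieves metric distortion at most $D$ has utilitarian distortion $\Omega\!\left(\frac{m\sqrt m}{D\,t\sqrt t}\right)$.
   Context: Setting: $n$ agents, $m$ alternatives; each agent has an underlying strict ranking, but the rule only receives each agent's ordered list of her top $t$ alternatives (a top-$t$ profile $\vec\sigma_t$) and outputs a probability distribution over alternatives. A full profile extends $\vec\sigma_t$ if each agent's top-$t$ prefix coincides with that in $\vec\sigma_t$. Metric framework: a pseudometric $d$ on agents and alternatives is consistent with a full profile $\vec\sigma$ if $X\succ_iY\Rightarrow d(i,X)\le d(i,Y)$, and consistent with $\vec\sigma_t$ if it is consistent with some full profile extending $\vec\sigma_t$. $\mathrm{SC}(X,d)=\sum_id(i,X)$. Metric distortion of a rule $f$: $\sup_{\vec\sigma_t}\sup_{d}\mathbb E_{X\sim f(\vec\sigma_t)}[\mathrm{SC}(X,d)]/\min_X\mathrm{SC}(X,d)$ over consistent $d$. Utilitarian framework: unit-sum nonnegative utilities $u_i$ ($\sum_Xu_i(X)=1$), consistent with a full profile if $X\succ_iY\Rightarrow u_i(X)\ge u_i(Y)$ and with $\vec\sigma_t$ if consistent with some full extension. $\mathrm{SW}(X,\vec u)=\sum_iu_i(X)$. Utilitarian distortion: $\sup_{\vec\sigma_t}\sup_{\vec u}\max_X\mathrm{SW}(X,\vec u)/\mathbb E_{X\sim f(\vec\sigma_t)}[\mathrm{SW}(X,\vec u)]$. *)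

theory Defs
  imports Complex_Main "HOL-Library.Extended_Real"
begin

text \<open>Alternatives are the naturals 0..<m; agents are 0..<n.
  A ranking of agent i is a list (best first) that is a permutation of [0..<m].
  A top-t profile is a list of n lists (one per agent), each being the ordered
  list of the agent's top t alternatives.\<close>

definition is_ranking :: "nat \<Rightarrow> nat list \<Rightarrow> bool" where
  "is_ranking m l \<longleftrightarrow> distinct l \<and> set l = {..<m}"

definition full_profile :: "nat \<Rightarrow> nat list list \<Rightarrow> bool" where
  "full_profile m \<sigma> \<longleftrightarrow> (\<forall>l\<in>set \<sigma>. is_ranking m l)"

definition top_profile :: "nat \<Rightarrow> nat \<Rightarrow> nat list list \<Rightarrow> bool" where
  "top_profile m t \<tau> \<longleftrightarrow>
     (\<forall>l\<in>set \<tau>. length l = t \<and> distinct l \<and> set l \<subseteq> {..<m})"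

definition extends :: "nat \<Rightarrow> nat list list \<Rightarrow> nat list list \<Rightarrow> bool" where
  "extends t \<sigma> \<tau> \<longleftrightarrow> length \<sigma> = length \<tau> \<and>
     (\<forall>i<length \<tau>. take t (\<sigma> ! i) = \<tau> ! i)"

definition is_rule :: "nat \<Rightarrow> nat \<Rightarrow> (nat list list \<Rightarrow> nat \<Rightarrow> real) \<Rightarrow> bool" where
  "is_rule m t f \<longleftrightarrow> (\<forall>\<tau>. top_profile m t \<tau> \<longrightarrow>
      (\<forall>X. f \<tau> X \<ge> 0) \<and> (\<forall>X\<ge>m. f \<tau> X = 0) \<and> (\<Sum>X<m. f \<tau> X) = 1)"

text \<open>Points: agents are Inl i, alternatives are Inr X.\<close>
definition points :: "nat \<Rightarrow> nat \<Rightarrow> (nat + nat) set" where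
  "points n m = Inl ` {..<n} \<union> Inr ` {..<m}"

definition pseudometric_on :: "(nat + nat) set \<Rightarrow> ((nat + nat) \<Rightarrow> (nat + nat) \<Rightarrow> real) \<Rightarrow> bool" where
  "pseudometric_on S d \<longleftrightarrow>
     (\<forall>x\<in>S. d x x = 0) \<and>
     (\<forall>x\<in>S. \<forall>y\<in>S. d x y \<ge> 0 \<and> d x y = d y x) \<and>
     (\<forall>x\<in>S. \<forall>y\<in>S. \<forall>z\<in>S. d x z \<le> d x y + d y z)"

definition metric_consistent_full ::
  "nat \<Rightarrow> nat list list \<Rightarrow> ((nat + nat) \<Rightarrow> (nat + nat) \<Rightarrow> real) \<Rightarrow> bool" where
  "metric_consistent_full m \<sigma> d \<longleftrightarrow>
     pseudometric_on (points (length \<sigma>) m) d \<and>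
     (\<forall>i<length \<sigma>. \<forall>a b. a < b \<and> b < m \<longrightarrow>
        d (Inl i) (Inr (\<sigma> ! i ! a)) \<le> d (Inl i) (Inr (\<sigma> ! i ! b)))"

definition metric_consistent ::
  "nat \<Rightarrow> nat \<Rightarrow> nat list list \<Rightarrow> ((nat + nat) \<Rightarrow> (nat + nat) \<Rightarrow> real) \<Rightarrow> bool" where
  "metric_consistent m t \<tau> d \<longleftrightarrow>
     (\<exists>\<sigma>. full_profile m \<sigma> \<and> extends t \<sigma> \<tau> \<and> metric_consistent_full m \<sigma> d)"

definition SC :: "nat \<Rightarrow> ((nat + nat) \<Rightarrow> (nat + nat) \<Rightarrow> real) \<Rightarrow> nat \<Rightarrow> real" where
  "SC n d X = (\<Sum>i<n. d (Inl i) (Inr X))"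

definition metric_distortion ::
  "nat \<Rightarrow> nat \<Rightarrow> (nat list list \<Rightarrow> nat \<Rightarrow> real) \<Rightarrow> ereal" where
  "metric_distortion m t f =
     (SUP p \<in> {(\<tau>, d). top_profile m t \<tau> \<and> \<tau> \<noteq> [] \<and> metric_consistent m t \<tau> d}.
        (case p of (\<tau>, d) \<Rightarrow>
          ereal (\<Sum>X<m. f \<tau> X * SC (length \<tau>) d X) /
          ereal (Min ((SC (length \<tau>) d) ` {..<m}))))"

definition util_consistent_full ::
  "nat \<Rightarrow> nat list list \<Rightarrow> (nat \<Rightarrow> nat \<Rightarrow> real) \<Rightarrow> bool" where
  "util_consistent_full m \<sigma> u \<longleftrightarrow>
     (\<forall>i<length \<sigma>. (\<forall>X<m. u i X \<ge> 0) \<and> (\<Sum>X<m. u i X) = 1 \<and>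
        (\<forall>a b. a < b \<and> b < m \<longrightarrow> u i (\<sigma> ! i ! a) \<ge> u i (\<sigma> ! i ! b)))"

definition util_consistent ::
  "nat \<Rightarrow> nat \<Rightarrow> nat list list \<Rightarrow> (nat \<Rightarrow> nat \<Rightarrow> real) \<Rightarrow> bool" where
  "util_consistent m t \<tau> u \<longleftrightarrow>
     (\<exists>\<sigma>. full_profile m \<sigma> \<and> extends t \<sigma> \<tau> \<and> util_consistent_full m \<sigma> u)"

definition SW :: "nat \<Rightarrow> (nat \<Rightarrow> nat \<Rightarrow> real) \<Rightarrow> nat \<Rightarrow> real" where
  "SW n u X = (\<Sum>i<n. u i X)"

definition util_distortion ::
  "nat \<Rightarrow> nat \<Rightarrow> (nat list list \<Rightarrow> nat \<Rightarrow> real) \<Rightarrow> ereal" where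
  "util_distortion m t f =
     (SUP p \<in> {(\<tau>, u). top_profile m t \<tau> \<and> \<tau> \<noteq> [] \<and> util_consistent m t \<tau> u}.
        (case p of (\<tau>, u) \<Rightarrow>
          ereal (Max ((SW (length \<tau>) u) ` {..<m})) /
          ereal (\<Sum>X<m. f \<tau> X * SW (length \<tau>) u X)))"

end

theory Submission
  imports Defs
begin
definition rk :: "nat list \<Rightarrow> nat \<Rightarrow> nat \<Rightarrow> nat \<Rightarrow> nat list" where
  "rk xs lo e m = xs @ [lo..<e] @ filter (\<lambda>x. x \<notin> set xs \<and> (x < lo \<or> e \<le> x)) [0..<m]"

lemma rk_ranking:
  assumes "distinct xs" "set xs \<subseteq> {..<lo}" "lo \<le> e" "e \<le> m"
  shows "is_ranking m (rk xs lo e m)"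
  using assms unfolding is_ranking_def rk_def
  by (auto simp: distinct_filter)

lemma rk_length:
  assumes "distinct xs" "set xs \<subseteq> {..<lo}" "lo \<le> e" "e \<le> m"
  shows "length (rk xs lo e m) = m"
proof -
  have "is_ranking m (rk xs lo e m)" using rk_ranking[OF assms] .
  then show ?thesis unfolding is_ranking_def using distinct_card by fastforce
qed

lemma rk_take: "take (length xs) (rk xs lo e m) = xs"
  by (simp add: rk_def)

lemma mono_util:
  fixes v :: "nat \<Rightarrow> real"
  assumes "\<forall>x\<in>set ys. v x = c" "\<forall>x\<in>set zs. v x = 0" "c \<ge> 0" "a < b" "b < length (ys @ zs)"
  shows "v ((ys @ zs) ! a) \<ge> v ((ys @ zs) ! b)"
proof (cases "b < length ys")
  case True
  then show ?thesis using assms by (simp add: nth_append)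
next
  case False
  then have "v ((ys @ zs) ! b) = 0" using assms by (simp add: nth_append)
  moreover have "v ((ys @ zs) ! a) \<ge> 0"
    using assms nth_mem[of a "ys@zs"] by (auto simp: nth_append split: if_splits)
  ultimately show ?thesis by simp
qed

lemma mono_metric:
  fixes v :: "nat \<Rightarrow> real"
  assumes "\<forall>x\<in>set xs. v x = 0" "\<forall>x. v x \<ge> 0"
    "\<And>x y. P x \<Longrightarrow> P y \<Longrightarrow> x \<le> y \<Longrightarrow> v x \<le> v y"
    "a < b" "b < length (xs @ filter P [0..<m])"
  shows "v ((xs @ filter P [0..<m]) ! a) \<le> v ((xs @ filter P [0..<m]) ! b)"
proof (cases "a < length xs")
  case True
  then show ?thesis using assms by (simp add: nth_append)
next
  case False
  let ?F = "filter P [0..<m]"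
  have s: "sorted_wrt (<) ?F" by (intro sorted_wrt_filter) simp
  have ab: "a - length xs < b - length xs" "b - length xs < length ?F"
    using False assms by auto
  have lt: "?F ! (a - length xs) < ?F ! (b - length xs)"
    using sorted_wrt_nth_less[OF s ab] .
  have "P (?F ! (a - length xs))" "P (?F ! (b - length xs))"
    using ab nth_mem by (metis (no_types, lifting) less_trans mem_Collect_eq set_filter)+
  then have "v (?F ! (a - length xs)) \<le> v (?F ! (b - length xs))"
    using assms(3) lt by simp
  then show ?thesis using False assms(4) by (simp add: nth_append)
qed

lemma div_eq_iff_range:
  fixes x t g :: nat assumes "t > 0"
  shows "x div t = g \<longleftrightarrow> g*t \<le> x \<and> x < g*t + t"
proof
  assume "x div t = g" then show "g*t \<le> x \<and> x < g*t + t"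
    using assms by (metis add.commute div_times_less_eq_dividend dividend_less_div_times mult.commute)
next
  assume "g*t \<le> x \<and> x < g*t + t" then show "x div t = g"
    using assms by (metis add.commute div_nat_eqI mult.commute mult_Suc)
qed

lemma sum_split_add: "(\<Sum>i<a + c. g i) = (\<Sum>i<a. g i) + (\<Sum>i<c. g (a + i))" for g :: "nat \<Rightarrow> real"
  by (induction c) (auto simp: add.assoc)

definition grp :: "nat \<Rightarrow> nat \<Rightarrow> nat \<Rightarrow> nat" where
  "grp k b i = (if i < k*b then i div b else k + (i - k*b))"
definition own :: "nat \<Rightarrow> nat \<Rightarrow> nat \<Rightarrow> nat \<Rightarrow> nat list" where
  "own k b t i = [grp k b i * t ..< grp k b i * t + t]"
definition tau :: "nat \<Rightarrow> nat \<Rightarrow> nat \<Rightarrow> nat list list" where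
  "tau k b t = map (own k b t) [0..<k*b+k]"

definition clg :: "nat \<Rightarrow> nat \<Rightarrow> nat" where
  "clg k g = (if g < k then 0 else g - k + 1)"
definition clP :: "nat \<Rightarrow> nat \<Rightarrow> nat \<Rightarrow> nat + nat \<Rightarrow> nat" where
  "clP k b t p = (case p of Inl i \<Rightarrow> clg k (grp k b i)
      | Inr x \<Rightarrow> if x < 2*k*t then clg k (x div t) else k+1)"
definition dm :: "nat \<Rightarrow> nat \<Rightarrow> nat \<Rightarrow> real \<Rightarrow> nat + nat \<Rightarrow> nat + nat \<Rightarrow> real" where
  "dm k b t R p q = (if clP k b t p = clP k b t q then 0
      else if clP k b t p = k+1 \<or> clP k b t q = k+1 then R else 1)"

lemma dm_pseudo: "R \<ge> 1 \<Longrightarrow> pseudometric_on S (dm k b t R)"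
  unfolding pseudometric_on_def dm_def by auto

context
  fixes k b t m :: nat
  assumes k: "k \<ge> 1" and b: "b \<ge> 1" and t: "t \<ge> 1" and hm: "2*k*t < m"
begin

lemma grp_lt: "i < k*b+k \<Longrightarrow> grp k b i < 2*k"
  unfolding grp_def using b by (auto simp: less_mult_imp_div_less mult.commute)

lemma grp_B: "i < k*b \<Longrightarrow> grp k b i < k"
  unfolding grp_def using b by (auto simp: less_mult_imp_div_less mult.commute)

lemma grp_A: "\<not> i < k*b \<Longrightarrow> grp k b i \<ge> k"
  unfolding grp_def by auto

lemma own_mem: "x \<in> set (own k b t i) \<longleftrightarrow> x div t = grp k b i"
  unfolding own_def using div_eq_iff_range[of t x] t by auto

lemma own_sub: "i < k*b+k \<Longrightarrow> set (own k b t i) \<subseteq> {..<2*k*t}"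
proof
  fix x assume i: "i < k*b+k" and x: "x \<in> set (own k b t i)"
  have "grp k b i + 1 \<le> 2*k" using grp_lt[OF i] by simp
  then have "(grp k b i + 1) * t \<le> 2*k*t" by (metis mult_le_mono1)
  then show "x \<in> {..<2*k*t}" using x unfolding own_def by (auto simp: algebra_simps)
qed

lemma own_len: "length (own k b t i) = t" unfolding own_def by simp
lemma own_dist: "distinct (own k b t i)" unfolding own_def by simp

lemma tau_top: "top_profile m t (tau k b t)"
  unfolding top_profile_def tau_def using own_sub own_len own_dist hm
  by (auto simp: own_len) (meson le_less_trans less_imp_le_nat lessThan_iff own_sub subsetD)

end

context
  fixes k b t m :: nat
  assumes k: "k \<ge> 1" and b: "b \<ge> 1" and t: "t \<ge> 1" and hm: "2*k*t < m"
begin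

definition "sigM = map (\<lambda>i. rk (own k b t i) (2*k*t) (2*k*t) m) [0..<k*b+k]"

lemma clg_le: "g < 2*k \<Longrightarrow> clg k g \<le> k" unfolding clg_def by auto

lemma metric_mono:
  assumes R: "R \<ge> 1" and i: "i < k*b+k"
    and xy: "x \<le> y" and Px: "x \<notin> set (own k b t i)" and Py: "y \<notin> set (own k b t i)"
  shows "dm k b t R (Inl i) (Inr x) \<le> dm k b t R (Inl i) (Inr y)"
proof -
  have ci: "clg k (grp k b i) \<le> k" using clg_le grp_lt[OF k b t hm i] by blast
  show ?thesis
  proof (cases "y < 2*k*t")
    case False
    have cy: "clP k b t (Inr y) = k+1" using False by (simp add: clP_def)
    have ciP: "clP k b t (Inl i) \<le> k" using ci by (simp add: clP_def)
    have "dm k b t R (Inl i) (Inr y) = R" using cy ciP by (simp add: dm_def)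
    moreover have "dm k b t R (Inl i) (Inr x) \<le> R" using R by (simp add: dm_def)
    ultimately show ?thesis by simp
  next
    case True
    then have xh: "x < 2*k*t" using xy by simp
    have dxy: "x div t \<le> y div t" using xy by (simp add: div_le_mono)
    have yd: "y div t < 2*k" using True t
      by (metis div_less_iff_less_mult mult.commute mult.left_commute not_one_le_zero not_gr_zero)
    have key: "clg k (y div t) = clg k (grp k b i) \<Longrightarrow> clg k (x div t) = clg k (grp k b i)"
    proof -
      assume eq: "clg k (y div t) = clg k (grp k b i)"
      show ?thesis
      proof (cases "grp k b i < k")
        case True
        then have "clg k (y div t) = 0" using eq unfolding clg_def by simp
        then have "y div t < k" unfolding clg_def by (auto split: if_splits)
        then show ?thesis using True dxy unfolding clg_def by auto
      next
        case False
        then have "y div t = grp k b i" using eq unfolding clg_def by (auto split: if_splits)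
        then have False using Py own_mem[OF k b t hm] by simp
        then show ?thesis by simp
      qed
    qed
    have xd': "x div t < 2*k" using xh t
      by (metis div_less_iff_less_mult mult.commute mult.left_commute not_one_le_zero not_gr_zero)
    have cx: "clg k (x div t) \<le> k" "clg k (y div t) \<le> k" using clg_le xd' yd by auto
    have "clP k b t (Inr x) = clg k (x div t)" "clP k b t (Inr y) = clg k (y div t)"
      "clP k b t (Inl i) = clg k (grp k b i)" using True xh unfolding clP_def by auto
    then show ?thesis using key ci cx R unfolding dm_def by (simp split: if_splits)
  qed
qed

lemma metric_cons: "R \<ge> 1 \<Longrightarrow> metric_consistent m t (tau k b t) (dm k b t R)"
  unfolding metric_consistent_def
proof (intro exI[of _ sigM] conjI)
  assume R: "R \<ge> 1"
  have hm': "2*k*t \<le> m" using hm by simp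
  show "full_profile m sigM" unfolding full_profile_def sigM_def
    proof (intro ballI)
    fix l assume "l \<in> set (map (\<lambda>i. rk (own k b t i) (2*k*t) (2*k*t) m) [0..<k*b+k])"
    then obtain i where i: "i < k*b+k" "l = rk (own k b t i) (2*k*t) (2*k*t) m" by auto
    show "is_ranking m l" unfolding i(2)
      by (rule rk_ranking[OF own_dist[OF k b t hm] own_sub[OF k b t hm i(1)]]) (use hm' in auto)
  qed
  show "extends t sigM (tau k b t)" unfolding extends_def sigM_def tau_def
    proof (intro conjI allI impI)
    show "length (map (\<lambda>i. rk (own k b t i) (2*k*t) (2*k*t) m) [0..<k*b+k]) = length (map (own k b t) [0..<k*b+k])" by simp
    fix i assume "i < length (map (own k b t) [0..<k*b+k])"
    then show "take t (map (\<lambda>i. rk (own k b t i) (2*k*t) (2*k*t) m) [0..<k*b+k] ! i) = map (own k b t) [0..<k*b+k] ! i"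
      using rk_take[of "own k b t i"] own_len[OF k b t hm] by simp
  qed
  show "metric_consistent_full m sigM (dm k b t R)"
    unfolding metric_consistent_full_def
  proof (intro conjI allI impI)
    show "pseudometric_on (points (length sigM) m) (dm k b t R)" using dm_pseudo R by blast
    fix i a c assume i: "i < length sigM" and ac: "a < c \<and> c < m"
    have i': "i < k*b+k" using i unfolding sigM_def by simp
    define P where "P = (\<lambda>x. x \<notin> set (own k b t i) \<and> (x < 2*k*t \<or> 2*k*t \<le> x))"
    have si: "sigM ! i = own k b t i @ filter P [0..<m]"
      unfolding sigM_def rk_def P_def using i' by simp
    have len: "length (sigM ! i) = m"
      unfolding sigM_def using rk_length own_dist[OF k b t hm] own_sub[OF k b t hm i'] hm' i' by simp
    have "dm k b t R (Inl i) (Inr ((own k b t i @ filter P [0..<m]) ! a))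
         \<le> dm k b t R (Inl i) (Inr ((own k b t i @ filter P [0..<m]) ! c))"
    proof (rule mono_metric[where v = "\<lambda>x. dm k b t R (Inl i) (Inr x)"])
      show "\<forall>x\<in>set (own k b t i). dm k b t R (Inl i) (Inr x) = 0"
        using own_mem[OF k b t hm] own_sub[OF k b t hm i'] unfolding dm_def clP_def by auto
      show "\<forall>x. 0 \<le> dm k b t R (Inl i) (Inr x)" using R unfolding dm_def by auto
      show "\<And>x y. P x \<Longrightarrow> P y \<Longrightarrow> x \<le> y \<Longrightarrow> dm k b t R (Inl i) (Inr x) \<le> dm k b t R (Inl i) (Inr y)"
        using metric_mono[OF R i'] unfolding P_def by blast
      show "a < c" using ac by simp
      show "c < length (own k b t i @ filter P [0..<m])" using ac len si by simp
    qed
    then show "dm k b t R (Inl i) (Inr (sigM ! i ! a)) \<le> dm k b t R (Inl i) (Inr (sigM ! i ! c))"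
      using si by simp
  qed
qed

end

lemma sum_three:
  fixes g :: "nat \<Rightarrow> real"
  assumes "a \<le> c" "c \<le> m"
  shows "(\<Sum>X<m. g X) = (\<Sum>X<a. g X) + (\<Sum>X\<in>{a..<c}. g X) + (\<Sum>X\<in>{c..<m}. g X)"
proof -
  have "(\<Sum>X<m. g X) = sum g {0..<m}" by (simp add: lessThan_atLeast0)
  also have "\<dots> = sum g {0..<a} + sum g {a..<c} + sum g {c..<m}"
    using assms by (metis le0 sum.atLeastLessThan_concat le_trans)
  finally show ?thesis by (simp add: lessThan_atLeast0)
qed

context
  fixes k b t m :: nat
  assumes k: "k \<ge> 1" and b: "b \<ge> 1" and t: "t \<ge> 1" and hm: "2*k*t < m"
begin

lemma clP_agentB: "i < k*b \<Longrightarrow> clP k b t (Inl i) = 0"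
  using grp_B[OF k b t hm] unfolding clP_def clg_def by auto

lemma clP_agentA: "\<not> i < k*b \<Longrightarrow> i < k*b+k \<Longrightarrow> clP k b t (Inl i) \<ge> 1 \<and> clP k b t (Inl i) \<le> k"
  using grp_A[OF k b t hm, of i] grp_lt[OF k b t hm, of i] unfolding clP_def clg_def by auto

lemma xdiv: "X < c*t \<Longrightarrow> X div t < c"
  using t by (simp add: less_mult_imp_div_less)

lemma clP_itemB: "X < k*t \<Longrightarrow> clP k b t (Inr X) = 0"
proof -
  assume X: "X < k*t"
  then have "X div t < k" using xdiv by simp
  moreover have "X < 2*k*t" using X by simp
  ultimately show ?thesis unfolding clP_def clg_def by simp
qed

lemma clP_itemA: "k*t \<le> X \<Longrightarrow> X < 2*k*t \<Longrightarrow> clP k b t (Inr X) \<ge> 1 \<and> clP k b t (Inr X) \<le> k"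
proof -
  assume X: "k*t \<le> X" "X < 2*k*t"
  then have "X div t < 2*k" using xdiv[of X "2*k"] by (simp add: mult.assoc)
  moreover have "X div t \<ge> k"
  proof -
    have "(k*t) div t = k" using t by simp
    then show ?thesis using div_le_mono[OF X(1), of t] by simp
  qed
  ultimately show ?thesis using X unfolding clP_def clg_def by auto
qed

lemma clP_itemU: "2*k*t \<le> X \<Longrightarrow> clP k b t (Inr X) = k+1"
  unfolding clP_def by simp

lemma SC_B: "X < k*t \<Longrightarrow> SC (k*b+k) (dm k b t R) X = k"
proof -
  assume X: "X < k*t"
  have "SC (k*b+k) (dm k b t R) X = (\<Sum>i<k*b. dm k b t R (Inl i) (Inr X)) + (\<Sum>i<k. dm k b t R (Inl (k*b+i)) (Inr X))"
    unfolding SC_def by (rule sum_split_add)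
  also have "(\<Sum>i<k*b. dm k b t R (Inl i) (Inr X)) = 0"
    using clP_agentB clP_itemB[OF X] by (simp add: dm_def)
  also have "(\<Sum>i<k. dm k b t R (Inl (k*b+i)) (Inr X)) = (\<Sum>i<k. 1)"
  proof (rule sum.cong)
    fix i assume "i \<in> {..<k}"
    then have "clP k b t (Inl (k*b+i)) \<ge> 1 \<and> clP k b t (Inl (k*b+i)) \<le> k" by (intro clP_agentA) auto
    then show "dm k b t R (Inl (k*b+i)) (Inr X) = 1" using clP_itemB[OF X] by (auto simp: dm_def)
  qed simp
  finally show ?thesis by simp
qed

lemma SC_A: "k*t \<le> X \<Longrightarrow> X < 2*k*t \<Longrightarrow> R \<ge> 1 \<Longrightarrow> SC (k*b+k) (dm k b t R) X \<ge> k*b"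
proof -
  assume X: "k*t \<le> X" "X < 2*k*t" and R: "R \<ge> 1"
  have "SC (k*b+k) (dm k b t R) X = (\<Sum>i<k*b. dm k b t R (Inl i) (Inr X)) + (\<Sum>i<k. dm k b t R (Inl (k*b+i)) (Inr X))"
    unfolding SC_def by (rule sum_split_add)
  moreover have "(\<Sum>i<k. dm k b t R (Inl (k*b+i)) (Inr X)) \<ge> 0"
    using R by (intro sum_nonneg) (auto simp: dm_def)
  moreover have "(\<Sum>i<k*b. dm k b t R (Inl i) (Inr X)) = (\<Sum>i<k*b. 1)"
  proof (rule sum.cong)
    fix i assume "i \<in> {..<k*b}"
    then show "dm k b t R (Inl i) (Inr X) = 1" using clP_agentB[of i] clP_itemA[OF X] by (auto simp: dm_def)
  qed simp
  ultimately show ?thesis by simp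
qed

lemma SC_U: "2*k*t \<le> X \<Longrightarrow> SC (k*b+k) (dm k b t R) X = (k*b+k) * R" for R :: real
proof -
  assume X: "2*k*t \<le> X"
  have "SC (k*b+k) (dm k b t R) X = (\<Sum>i<k*b+k. R)"
    unfolding SC_def
  proof (rule sum.cong)
    fix i assume i: "i \<in> {..<k*b+k}"
    have "clP k b t (Inl i) \<le> k"
      using clP_agentB[of i] clP_agentA[of i] i by (cases "i < k*b") auto
    then show "dm k b t R (Inl i) (Inr X) = R" using clP_itemU[OF X] by (auto simp: dm_def)
  qed simp
  then show ?thesis by simp
qed

lemma SC_nonneg: "R \<ge> 1 \<Longrightarrow> SC n (dm k b t R) X \<ge> 0"
  unfolding SC_def by (intro sum_nonneg) (auto simp: dm_def)

lemma metric_bound: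
  fixes D R :: real and f :: "nat list list \<Rightarrow> nat \<Rightarrow> real"
  assumes D: "D \<ge> 1" and R: "R \<ge> 1" and rule: "is_rule m t f"
    and md: "metric_distortion m t f \<le> ereal D"
  shows "(\<Sum>X\<in>{k*t..<2*k*t}. f (tau k b t) X) * (k*b) + (\<Sum>X\<in>{2*k*t..<m}. f (tau k b t) X) * ((k*b+k) * R) \<le> D * k"
proof -
  let ?tau = "tau k b t"
  let ?d = "dm k b t R"
  let ?n = "k*b+k"
  let ?SC = "SC ?n ?d"
  have len: "length ?tau = ?n" by (simp add: tau_def)
  have tp: "top_profile m t ?tau" using tau_top[OF k b t hm] .
  have ne: "?tau \<noteq> []" using k by (simp add: tau_def)
  have mc: "metric_consistent m t ?tau ?d" using metric_cons[OF k b t hm R] .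
  have fr: "\<forall>X. f ?tau X \<ge> 0" using rule tp unfolding is_rule_def by blast
  define E where "E = (\<Sum>X<m. f ?tau X * ?SC X)"
  define Mn where "Mn = Min (?SC ` {..<m})"
  have "ereal E / ereal Mn \<le> metric_distortion m t f"
    unfolding metric_distortion_def E_def Mn_def
    by (rule SUP_upper2[where i="(?tau, ?d)"]) (use tp ne mc len in auto)
  then have r: "ereal E / ereal Mn \<le> ereal D" using md by simp
  have fin: "finite (?SC ` {..<m})" by simp
  have nemp: "?SC ` {..<m} \<noteq> {}" using hm by auto
  have pos: "\<forall>y\<in>?SC ` {..<m}. y > 0"
  proof
    fix y assume "y \<in> ?SC ` {..<m}"
    then obtain X where X: "X < m" "y = ?SC X" by auto
    show "y > 0"
    proof (cases "X < k*t")
      case True then show ?thesis using SC_B X k by simp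
    next
      case False
      show ?thesis
      proof (cases "X < 2*k*t")
        case True
        have "real (k*b) > 0" using k b by simp
        then show ?thesis using SC_A[OF _ True R] False X by (smt (verit) not_less)
      next
        case False2: False
        have "real (k*b+k) > 0" using k by (simp del: of_nat_add of_nat_mult)
        then have "real (k*b+k) * R > 0" using R by simp
        then show ?thesis using SC_U[OF _] False2 X by simp
      qed
    qed
  qed
  have Mpos: "Mn > 0" unfolding Mn_def using Min_in[OF fin nemp] pos by auto
  have Mle: "Mn \<le> k"
  proof -
    have "0 < k*t" using k t by simp
    then have "?SC 0 = k" using SC_B by simp
    moreover have "0 < m" using hm by simp
    ultimately have "real k \<in> ?SC ` {..<m}" by (metis image_eqI lessThan_iff)
    then show ?thesis unfolding Mn_def using fin by simp
  qed
  have "E / Mn \<le> D" using r Mpos by (simp add: ereal_divide)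
  then have "E \<le> D * Mn" using Mpos by (simp add: divide_le_eq)
  also have "\<dots> \<le> D * k" using Mle D by simp
  finally have EDk: "E \<le> D * k" .
  have split: "E = (\<Sum>X<k*t. f ?tau X * ?SC X) + (\<Sum>X\<in>{k*t..<2*k*t}. f ?tau X * ?SC X) + (\<Sum>X\<in>{2*k*t..<m}. f ?tau X * ?SC X)"
    unfolding E_def by (rule sum_three) (use hm in auto)
  have p1: "(\<Sum>X<k*t. f ?tau X * ?SC X) \<ge> 0"
    using fr SC_nonneg[OF R] by (intro sum_nonneg) simp
  have p2: "(\<Sum>X\<in>{k*t..<2*k*t}. f ?tau X * ?SC X) \<ge> (\<Sum>X\<in>{k*t..<2*k*t}. f ?tau X) * (k*b)"
    unfolding sum_distrib_right
  proof (rule sum_mono)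
    fix X assume "X \<in> {k*t..<2*k*t}"
    then have "?SC X \<ge> k*b" using SC_A R by simp
    then show "f ?tau X * real (k*b) \<le> f ?tau X * ?SC X" using fr by (simp add: mult_left_mono)
  qed
  have p3: "(\<Sum>X\<in>{2*k*t..<m}. f ?tau X * ?SC X) = (\<Sum>X\<in>{2*k*t..<m}. f ?tau X) * ((k*b+k) * R)"
    unfolding sum_distrib_right
  proof (rule sum.cong)
    fix X assume "X \<in> {2*k*t..<m}"
    then have "?SC X = (k*b+k) * R" using SC_U by simp
    then show "f ?tau X * ?SC X = f ?tau X * ((k*b+k) * R)" by simp
  qed simp
  have "(\<Sum>X\<in>{k*t..<2*k*t}. f ?tau X) * (k*b) + (\<Sum>X\<in>{2*k*t..<m}. f ?tau X) * ((k*b+k) * R)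
     \<le> (\<Sum>X\<in>{k*t..<2*k*t}. f ?tau X * ?SC X) + (\<Sum>X\<in>{2*k*t..<m}. f ?tau X * ?SC X)"
    by (rule add_mono[OF p2]) (simp only: p3 order_refl)
  also have "\<dots> \<le> E" unfolding split using p1 by (simp only: add.assoc le_add_same_cancel2)
  also have "\<dots> \<le> D * k" by (rule EDk)
  finally show ?thesis by argo
qed

end

lemma sum_ind_const:
  fixes c :: real and m :: nat and P :: "nat \<Rightarrow> bool"
  shows "(\<Sum>X<m. if P X then c else 0) = c * card {X. X < m \<and> P X}"
proof -
  have "(\<Sum>X<m. if P X then c else 0) = sum (\<lambda>_. c) {X \<in> {..<m}. P X}"
    using sum.inter_filter[OF finite_lessThan[of m], of "\<lambda>_. c" P] by simp
  also have "{X \<in> {..<m}. P X} = {X. X < m \<and> P X}" by auto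
  finally show ?thesis by simp
qed

definition WW :: "nat \<Rightarrow> nat \<Rightarrow> nat \<Rightarrow> real" where
  "WW k t m = real t + real (m - 2*k*t)"

definition uu :: "nat \<Rightarrow> nat \<Rightarrow> nat \<Rightarrow> nat \<Rightarrow> nat \<Rightarrow> nat \<Rightarrow> real" where
  "uu k b t m i X = (if i < k*b then (if X div t = grp k b i \<or> 2*k*t \<le> X then 1 / WW k t m else 0)
      else (if X div t = grp k b i \<or> X = 2*k*t then 1 / (real t + 1) else 0))"

context
  fixes k b t m :: nat
  assumes k: "k \<ge> 1" and b: "b \<ge> 1" and t: "t \<ge> 1" and hm: "2*k*t < m"
begin

definition "sigU = map (\<lambda>i. rk (own k b t i) (2*k*t) (if i < k*b then m else 2*k*t+1) m) [0..<k*b+k]"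

lemma WW_ge: "WW k t m \<ge> 1" unfolding WW_def using t by simp

lemma grp_ht: "i < k*b+k \<Longrightarrow> grp k b i * t + t \<le> 2*k*t"
proof -
  assume i: "i < k*b+k"
  have "grp k b i + 1 \<le> 2*k" using grp_lt[OF k b t hm i] by simp
  then have "(grp k b i + 1) * t \<le> 2*k*t" by (metis mult_le_mono1)
  then show ?thesis by (simp add: algebra_simps)
qed

lemma uu_sum: "i < k*b+k \<Longrightarrow> (\<Sum>X<m. uu k b t m i X) = 1"
proof -
  assume i: "i < k*b+k"
  let ?g = "grp k b i"
  have ght: "?g * t + t \<le> 2*k*t" using grp_ht[OF i] .
  show ?thesis
  proof (cases "i < k*b")
    case True
    have "(\<Sum>X<m. uu k b t m i X) = (\<Sum>X<m. if X div t = ?g \<or> 2*k*t \<le> X then 1 / WW k t m else 0)"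
      unfolding uu_def using True by simp
    also have "\<dots> = 1 / WW k t m * card {X. X < m \<and> (X div t = ?g \<or> 2*k*t \<le> X)}"
      by (rule sum_ind_const)
    also have "{X. X < m \<and> (X div t = ?g \<or> 2*k*t \<le> X)} = {?g*t..<?g*t+t} \<union> {2*k*t..<m}"
      using div_eq_iff_range[of t] t ght hm by auto
    also have "card ({?g*t..<?g*t+t} \<union> {2*k*t..<m}) = t + (m - 2*k*t)"
      using ght by (subst card_Un_disjoint) auto
    finally show ?thesis unfolding WW_def using t by simp
  next
    case False
    have "(\<Sum>X<m. uu k b t m i X) = (\<Sum>X<m. if X div t = ?g \<or> X = 2*k*t then 1 / (real t + 1) else 0)"
      unfolding uu_def using False by simp
    also have "\<dots> = 1 / (real t + 1) * card {X. X < m \<and> (X div t = ?g \<or> X = 2*k*t)}"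
      by (rule sum_ind_const)
    also have "{X. X < m \<and> (X div t = ?g \<or> X = 2*k*t)} = {?g*t..<?g*t+t} \<union> {2*k*t}"
      using div_eq_iff_range[of t] t ght hm by auto
    also have "card ({?g*t..<?g*t+t} \<union> {2*k*t}) = t + 1"
      using ght by (subst card_Un_disjoint) auto
    finally show ?thesis by simp
  qed
qed

lemma uu_nonneg: "uu k b t m i X \<ge> 0" unfolding uu_def using WW_ge by auto

lemma uu_le1: "uu k b t m i X \<le> 1" unfolding uu_def using WW_ge by auto

lemma util_cons: "util_consistent m t (tau k b t) (uu k b t m)"
  unfolding util_consistent_def
proof (intro exI[of _ sigU] conjI)
  have hm': "2*k*t \<le> m" using hm by simp
  show "full_profile m sigU" unfolding full_profile_def sigU_def
  proof (intro ballI)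
    fix l assume "l \<in> set (map (\<lambda>i. rk (own k b t i) (2*k*t) (if i < k*b then m else 2*k*t+1) m) [0..<k*b+k])"
    then obtain i where i: "i < k*b+k" "l = rk (own k b t i) (2*k*t) (if i < k*b then m else 2*k*t+1) m" by auto
    show "is_ranking m l" unfolding i(2)
      by (rule rk_ranking[OF own_dist[OF k b t hm] own_sub[OF k b t hm i(1)]]) (use hm in auto)
  qed
  show "extends t sigU (tau k b t)" unfolding extends_def sigU_def tau_def
  proof (intro conjI allI impI)
    show "length (map (\<lambda>i. rk (own k b t i) (2*k*t) (if i < k*b then m else 2*k*t+1) m) [0..<k*b+k]) = length (map (own k b t) [0..<k*b+k])" by simp
    fix i assume "i < length (map (own k b t) [0..<k*b+k])"
    then show "take t (map (\<lambda>i. rk (own k b t i) (2*k*t) (if i < k*b then m else 2*k*t+1) m) [0..<k*b+k] ! i) = map (own k b t) [0..<k*b+k] ! i"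
      using rk_take[of "own k b t i"] own_len[OF k b t hm] by simp
  qed
  show "util_consistent_full m sigU (uu k b t m)"
    unfolding util_consistent_full_def
  proof (intro allI impI)
    fix i assume i: "i < length sigU"
    have i': "i < k*b+k" using i unfolding sigU_def by simp
    have A1: "\<forall>X<m. 0 \<le> uu k b t m i X" using uu_nonneg by simp
    have A2: "(\<Sum>X<m. uu k b t m i X) = 1" using uu_sum[OF i'] .
    have A3: "uu k b t m i (sigU ! i ! c) \<le> uu k b t m i (sigU ! i ! a)" if ac: "a < c \<and> c < m" for a c
    proof -
    define e where "e = (if i < k*b then m else 2*k*t+1)"
    define ys where "ys = own k b t i @ [2*k*t..<e]"
    define zs where "zs = filter (\<lambda>x. x \<notin> set (own k b t i) \<and> (x < 2*k*t \<or> e \<le> x)) [0..<m]"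
    have si: "sigU ! i = ys @ zs" unfolding sigU_def rk_def ys_def zs_def e_def using i' by simp
    have len: "length (sigU ! i) = m"
      unfolding sigU_def using rk_length own_dist[OF k b t hm] own_sub[OF k b t hm i'] hm i' by simp
    define c0 where "c0 = (if i < k*b then 1 / WW k t m else 1 / (real t + 1))"
    have "uu k b t m i ((ys @ zs) ! c) \<le> uu k b t m i ((ys @ zs) ! a)"
    proof (rule mono_util[where c = c0])
      show "\<forall>x\<in>set ys. uu k b t m i x = c0"
        unfolding ys_def e_def c0_def uu_def using own_mem[OF k b t hm] by auto
      show "\<forall>x\<in>set zs. uu k b t m i x = 0"
        unfolding zs_def e_def uu_def using own_mem[OF k b t hm] by auto
      show "0 \<le> c0" unfolding c0_def using WW_ge by simp
      show "a < c" using ac by simp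
      show "c < length (ys @ zs)" using ac len si by simp
    qed
    then show "uu k b t m i (sigU ! i ! c) \<le> uu k b t m i (sigU ! i ! a)" using si by simp
    qed
    show "(\<forall>X<m. 0 \<le> uu k b t m i X) \<and> (\<Sum>X<m. uu k b t m i X) = 1 \<and>
        (\<forall>a c. a < c \<and> c < m \<longrightarrow> uu k b t m i (sigU ! i ! c) \<le> uu k b t m i (sigU ! i ! a))"
      using A1 A2 A3 by blast
  qed
qed

end

context
  fixes k b t m :: nat
  assumes k: "k \<ge> 1" and b: "b \<ge> 1" and t: "t \<ge> 1" and hm: "2*k*t < m"
begin

lemma SW_h: "SW (k*b+k) (uu k b t m) (2*k*t) \<ge> k / (real t + 1)"
proof -
  have "SW (k*b+k) (uu k b t m) (2*k*t) = (\<Sum>i<k*b. uu k b t m i (2*k*t)) + (\<Sum>i<k. uu k b t m (k*b+i) (2*k*t))"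
    unfolding SW_def by (rule sum_split_add)
  moreover have "(\<Sum>i<k*b. uu k b t m i (2*k*t)) \<ge> 0" using uu_nonneg[OF k b t hm] by (simp add: sum_nonneg)
  moreover have "(\<Sum>i<k. uu k b t m (k*b+i) (2*k*t)) = (\<Sum>i<k. 1 / (real t + 1))"
    by (rule sum.cong) (auto simp: uu_def)
  ultimately show ?thesis by simp
qed

lemma SW_B: "X < k*t \<Longrightarrow> SW (k*b+k) (uu k b t m) X \<le> b / WW k t m"
proof -
  assume X: "X < k*t"
  have q: "X div t < k" using xdiv[OF k b t hm X] .
  have "SW (k*b+k) (uu k b t m) X = (\<Sum>i<k*b. uu k b t m i X) + (\<Sum>i<k. uu k b t m (k*b+i) X)"
    unfolding SW_def by (rule sum_split_add)
  also have "(\<Sum>i<k. uu k b t m (k*b+i) X) = 0"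
    using q X unfolding uu_def grp_def by (intro sum.neutral) auto
  also have "(\<Sum>i<k*b. uu k b t m i X) = (\<Sum>i<k*b. if i div b = X div t then 1 / WW k t m else 0)"
  proof (rule sum.cong)
    fix i assume "i \<in> {..<k*b}"
    then show "uu k b t m i X = (if i div b = X div t then 1 / WW k t m else 0)"
      using X unfolding uu_def grp_def by auto
  qed simp
  also have "\<dots> = (\<Sum>j<k. \<Sum>i\<in>{j*b..<j*b+b}. if i div b = X div t then 1 / WW k t m else 0)"
    by (rule sum.nat_group[symmetric])
  also have "\<dots> = (\<Sum>j<k. if j = X div t then b / WW k t m else 0)"
  proof (rule sum.cong)
    fix j assume "j \<in> {..<k}"
    have "(\<Sum>i\<in>{j*b..<j*b+b}. if i div b = X div t then 1 / WW k t m else 0)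
        = (\<Sum>i\<in>{j*b..<j*b+b}. if j = X div t then 1 / WW k t m else 0)"
    proof (rule sum.cong)
      fix i assume "i \<in> {j*b..<j*b+b}"
      then have "i div b = j" using div_eq_iff_range[of b i j] b by auto
      then show "(if i div b = X div t then 1 / WW k t m else 0) = (if j = X div t then 1 / WW k t m else 0)" by simp
    qed simp
    then show "(\<Sum>i\<in>{j*b..<j*b+b}. if i div b = X div t then 1 / WW k t m else 0) = (if j = X div t then b / WW k t m else 0)"
      by simp
  qed simp
  also have "\<dots> = b / WW k t m" using q by (simp add: sum.delta)
  finally show ?thesis by simp
qed

lemma SW_A: "k*t \<le> X \<Longrightarrow> X < 2*k*t \<Longrightarrow> SW (k*b+k) (uu k b t m) X \<le> 1 / (real t + 1)"
proof -
  assume X: "k*t \<le> X" "X < 2*k*t"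
  have q1: "X div t < 2*k" using xdiv[OF k b t hm, of X "2*k"] X by (simp add: mult.assoc)
  have q2: "X div t \<ge> k"
  proof -
    have "(k*t) div t = k" using t by simp
    then show ?thesis using div_le_mono[OF X(1), of t] by simp
  qed
  have "SW (k*b+k) (uu k b t m) X = (\<Sum>i<k*b. uu k b t m i X) + (\<Sum>i<k. uu k b t m (k*b+i) X)"
    unfolding SW_def by (rule sum_split_add)
  also have "(\<Sum>i<k*b. uu k b t m i X) = 0"
  proof (rule sum.neutral, intro ballI)
    fix i assume "i \<in> {..<k*b}"
    then have "grp k b i < k" using grp_B[OF k b t hm] by simp
    then show "uu k b t m i X = 0" using q2 X unfolding uu_def by auto
  qed
  also have "(\<Sum>i<k. uu k b t m (k*b+i) X) = (\<Sum>i<k. if i = X div t - k then 1 / (real t + 1) else 0)"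
  proof (rule sum.cong)
    fix i assume "i \<in> {..<k}"
    then show "uu k b t m (k*b+i) X = (if i = X div t - k then 1 / (real t + 1) else 0)"
      using X q2 unfolding uu_def grp_def by auto
  qed simp
  also have "\<dots> = 1 / (real t + 1)" using q1 q2 by (simp add: sum.delta)
  finally show ?thesis by simp
qed

lemma SW_le: "SW (k*b+k) (uu k b t m) X \<le> real (k*b+k)"
proof -
  have "SW (k*b+k) (uu k b t m) X \<le> (\<Sum>i<k*b+k. 1)"
    unfolding SW_def by (rule sum_mono) (rule uu_le1[OF k b t hm])
  then show ?thesis by simp
qed

lemma SW_nonneg: "SW n (uu k b t m) X \<ge> 0"
  unfolding SW_def using uu_nonneg[OF k b t hm] by (simp add: sum_nonneg)

end

context
  fixes k b t m :: nat
  assumes k: "k \<ge> 1" and b: "b \<ge> 1" and t: "t \<ge> 1" and hm: "2*k*t < m"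
begin

lemma util_main:
  fixes D :: real and f :: "nat list list \<Rightarrow> nat \<Rightarrow> real"
  assumes D: "D \<ge> 1" and rule: "is_rule m t f" and md: "metric_distortion m t f \<le> ereal D"
  shows "util_distortion m t f \<ge> ereal ((k / (real t + 1)) / (2 * b / WW k t m + D / (b * (real t + 1))))"
proof -
  let ?tau = "tau k b t"
  let ?u = "uu k b t m"
  let ?n = "k*b+k"
  let ?W = "WW k t m"
  let ?F = "f ?tau"
  have W1: "?W \<ge> 1" using WW_ge[OF k b t hm] .
  define R where "R = D * k * ?W"
  have R1: "R \<ge> 1"
  proof -
    have "real k \<ge> 1" using k by simp
    then have "D * k \<ge> 1 * 1" using D by (intro mult_mono) auto
    then have "D * k * ?W \<ge> 1 * 1" using W1 by (intro mult_mono) auto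
    then show ?thesis unfolding R_def by simp
  qed
  have tp: "top_profile m t ?tau" using tau_top[OF k b t hm] .
  have fr: "\<forall>X. ?F X \<ge> 0" and fs: "(\<Sum>X<m. ?F X) = 1" using rule tp unfolding is_rule_def by blast+
  define FB where "FB = (\<Sum>X<k*t. ?F X)"
  define FA where "FA = (\<Sum>X\<in>{k*t..<2*k*t}. ?F X)"
  define FU where "FU = (\<Sum>X\<in>{2*k*t..<m}. ?F X)"
  have mb: "FA * (k*b) + FU * (?n * R) \<le> D * k"
    unfolding FA_def FU_def using metric_bound[OF k b t hm D R1 rule md] .
  have tot: "FB + FA + FU = 1" unfolding FB_def FA_def FU_def
    using sum_three[of "k*t" "2*k*t" m ?F] hm fs by simp
  have FBn: "FB \<ge> 0" "FA \<ge> 0" "FU \<ge> 0" unfolding FB_def FA_def FU_def using fr by (auto intro: sum_nonneg)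
  have kpos: "real k > 0" using k by simp
  have bpos: "real b > 0" using b by simp
  have npos: "real ?n > 0" using k by (simp del: of_nat_add of_nat_mult)
  have FAb: "FA \<le> D / b"
  proof -
    have "FU * (?n * R) \<ge> 0" using FBn npos R1 by simp
    then have "FA * (k*b) \<le> D * k" using mb by linarith
    then have "(FA * b) * k \<le> D * k" by (simp add: algebra_simps)
    then have "FA * b \<le> D" using kpos by simp
    then show ?thesis using bpos by (simp add: pos_le_divide_eq)
  qed
  have FUb: "FU * ?n \<le> 1 / ?W"
  proof -
    have "FA * (k*b) \<ge> 0" using FBn by simp
    then have "FU * (?n * R) \<le> D * k" using mb by linarith
    then have "(FU * ?n * ?W) * (D * k) \<le> 1 * (D * k)" unfolding R_def by (simp add: algebra_simps)
    moreover have "D * k > 0" using D kpos by simp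
    ultimately have "FU * ?n * ?W \<le> 1" by (meson mult_le_cancel_right_pos)
    then show ?thesis using W1 by (simp add: pos_le_divide_eq)
  qed
  define E where "E = (\<Sum>X<m. ?F X * SW ?n ?u X)"
  have Esplit: "E = (\<Sum>X<k*t. ?F X * SW ?n ?u X) + (\<Sum>X\<in>{k*t..<2*k*t}. ?F X * SW ?n ?u X) + (\<Sum>X\<in>{2*k*t..<m}. ?F X * SW ?n ?u X)"
    unfolding E_def by (rule sum_three) (use hm in auto)
  have e1: "(\<Sum>X<k*t. ?F X * SW ?n ?u X) \<le> FB * (b / ?W)"
    unfolding FB_def sum_distrib_right
  proof (rule sum_mono)
    fix X assume "X \<in> {..<k*t}"
    then have "SW ?n ?u X \<le> b / ?W" using SW_B[OF k b t hm] by simp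
    then show "?F X * SW ?n ?u X \<le> ?F X * (b / ?W)" using fr by (intro mult_left_mono) auto
  qed
  have e2: "(\<Sum>X\<in>{k*t..<2*k*t}. ?F X * SW ?n ?u X) \<le> FA * (1 / (real t + 1))"
    unfolding FA_def sum_distrib_right
  proof (rule sum_mono)
    fix X assume "X \<in> {k*t..<2*k*t}"
    then have "SW ?n ?u X \<le> 1 / (real t + 1)" using SW_A[OF k b t hm] by simp
    then show "?F X * SW ?n ?u X \<le> ?F X * (1 / (real t + 1))" using fr by (intro mult_left_mono) auto
  qed
  have e3: "(\<Sum>X\<in>{2*k*t..<m}. ?F X * SW ?n ?u X) \<le> FU * ?n"
    unfolding FU_def sum_distrib_right
    by (rule sum_mono) (use fr SW_le[OF k b t hm] in \<open>auto intro: mult_left_mono\<close>)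
  have E0: "E \<ge> 0" unfolding E_def using fr SW_nonneg[OF k b t hm] by (auto intro: sum_nonneg)
  define Q where "Q = 2 * b / ?W + D / (b * (real t + 1))"
  have EQ: "E \<le> Q"
  proof -
    have a: "FB * (b / ?W) \<le> b / ?W" using tot FBn bpos W1
    proof -
      have "FB \<le> 1" using tot FBn by linarith
      moreover have "b / ?W \<ge> 0" using W1 by simp
      ultimately show ?thesis using mult_right_mono[of FB 1 "b / ?W"] by simp
    qed
    have c: "FA * (1 / (real t + 1)) \<le> D / (b * (real t + 1))"
    proof -
      have "FA * (1 / (real t + 1)) \<le> (D / b) * (1 / (real t + 1))"
        using FAb by (intro mult_right_mono) auto
      then show ?thesis by simp
    qed
    have d: "1 / ?W \<le> b / ?W" using b W1 by (simp add: divide_right_mono)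
    show ?thesis unfolding Q_def using Esplit e1 e2 e3 a c d FUb by linarith
  qed
  have Qpos: "Q > 0" unfolding Q_def using bpos W1 D by (simp add: add_pos_pos)
  define Mx where "Mx = Max (SW ?n ?u ` {..<m})"
  have Mx: "Mx \<ge> k / (real t + 1)"
  proof -
    have "SW ?n ?u (2*k*t) \<le> Mx" unfolding Mx_def using hm by (intro Max_ge) auto
    then show ?thesis using SW_h[OF k b t hm] by linarith
  qed
  have Spos: "k / (real t + 1) > 0" using kpos by simp
  have elem: "ereal Mx / ereal E \<le> util_distortion m t f"
    unfolding util_distortion_def Mx_def E_def
    by (rule SUP_upper2[where i="(?tau, ?u)"])
       (use tp util_cons[OF k b t hm] k in \<open>auto simp: tau_def\<close>)
  have "ereal ((k / (real t + 1)) / Q) \<le> ereal Mx / ereal E"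
  proof (cases "E = 0")
    case True
    have "Mx > 0" using Mx Spos by linarith
    then show ?thesis using True by (simp add: ereal_divide)
  next
    case False
    then have Ep: "E > 0" using E0 by simp
    have "(k / (real t + 1)) / Q \<le> Mx / E"
      using Mx EQ Ep Spos by (intro frac_le) auto
    then show ?thesis using Ep by (simp add: ereal_divide)
  qed
  then show ?thesis using elem unfolding Q_def by (rule order_trans)
qed

end

lemma arith_main:
  fixes M T D K W B s :: real
  assumes T: "T \<ge> 1" and D: "D \<ge> 1" and M: "M \<ge> 6*T" and K: "K \<ge> M/(6*T)" and W: "W \<ge> M/3"
    and s: "s = sqrt (M/T)" and B1: "B \<ge> s" and B2: "B \<le> 2*s"
  shows "(1/156 * (M * sqrt M)) / (D * (T * sqrt T)) \<le> (K/(T+1)) / (2*B/W + D/(B*(T+1)))"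
proof -
  have Tp: "T > 0" using T by simp
  have Mp: "M > 0" using M T by simp
  have sp: "s > 0" using s Mp Tp by simp
  have ss: "s*s = M/T" using s Mp Tp by (simp add: real_sqrt_mult_self)
  have sMT: "s*s*T = M" using ss Tp by simp
  have sqM: "sqrt M = s * sqrt T"
  proof -
    have "M = (M/T) * T" using Tp by simp
    then have "sqrt M = sqrt (M/T) * sqrt T" by (metis real_sqrt_mult)
    then show ?thesis using s by simp
  qed
  have sqT: "sqrt T > 0" using Tp by simp
  have lhs: "(1/156 * (M * sqrt M)) / (D * (T * sqrt T)) = M * s / (156 * D * T)"
    using sqM sqT Tp D by (simp add: field_simps)
  have Wp: "W > 0" using W Mp by linarith
  have Bp: "B > 0" using B1 sp by linarith
  have q1: "2*B/W \<le> 12 / (s*T)"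
  proof -
    have "2*B/W \<le> 2*(2*s)/(M/3)"
      using B2 W Bp Wp Mp by (intro frac_le) auto
    also have "\<dots> = 12 * s / M" using Mp by (simp add: field_simps)
    also have "\<dots> = 12 / (s*T)"
    proof -
      have "12 * s / M = 12 * s / (s*s*T)" using sMT by simp
      also have "\<dots> = 12 / (s*T)" using sp Tp by (simp add: field_simps)
      finally show ?thesis .
    qed
    finally show ?thesis .
  qed
  have q2: "D/(B*(T+1)) \<le> D / (s*T)"
  proof -
    have "s*T \<le> B*(T+1)" using B1 sp Tp by (smt (verit) mult_mono)
    moreover have "0 < B * (T + 1) * (s * T)" using Bp sp Tp by simp
    ultimately show ?thesis using D sp Tp by (intro divide_left_mono) auto
  qed
  have q3: "12 / (s*T) \<le> 12 * D / (s*T)" using D sp Tp by (simp add: divide_right_mono)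
  have Q: "2*B/W + D/(B*(T+1)) \<le> 13 * D / (s*T)"
  proof -
    have "13 * D / (s*T) = 12 * D / (s*T) + D / (s*T)" by (simp add: field_simps add_divide_distrib[symmetric])
    then show ?thesis using add_mono[OF order_trans[OF q1 q3] q2] by (simp add: mult.commute)
  qed
  have Qp: "2*B/W + D/(B*(T+1)) > 0" using Bp Wp Tp D by (simp add: add_pos_pos)
  have k2: "K/(T+1) \<ge> M / (12*T*T)"
  proof -
    have "M / (12*T*T) = (M/(6*T)) / (2*T)" using Tp by (simp add: field_simps)
    also have "\<dots> \<le> K / (T+1)"
    proof -
      have "M/(6*T) > 0" using Mp Tp by simp
      then have "K \<ge> 0" using K by linarith
      then show ?thesis using K T Tp Mp by (intro frac_le) auto
    qed
    finally show ?thesis .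
  qed
  have "M * s / (156 * D * T) = (M / (12*T*T)) / (13 * D / (s*T))"
    using sp Tp D by (simp add: field_simps)
  also have "\<dots> \<le> (K/(T+1)) / (2*B/W + D/(B*(T+1)))"
  proof (rule frac_le[of "K/(T+1)" "M / (12*T*T)"])
    show "0 \<le> K/(T+1)" using k2 Mp Tp by (smt (verit) divide_pos_pos mult_pos_pos)
  qed (use k2 Q Qp in auto)
  finally show ?thesis using lhs by simp
qed

lemma util_ge1:
  fixes f :: "nat list list \<Rightarrow> nat \<Rightarrow> real"
  assumes t: "1 \<le> t" "t \<le> m" and rule: "is_rule m t f"
  shows "util_distortion m t f \<ge> 1"
proof -
  let ?tau = "[[0..<t]]"
  let ?u = "\<lambda>(i::nat) (X::nat). 1 / real m"
  have mp: "m > 0" using t by simp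
  have tp: "top_profile m t ?tau" unfolding top_profile_def using t by auto
  have uc: "util_consistent m t ?tau ?u" unfolding util_consistent_def
  proof (intro exI[of _ "[[0..<m]]"] conjI)
    show "full_profile m [[0..<m]]" unfolding full_profile_def is_ranking_def by auto
    show "extends t [[0..<m]] ?tau" unfolding extends_def using t by (simp add: take_upt min_def)
    show "util_consistent_full m [[0..<m]] ?u" unfolding util_consistent_full_def using mp by simp
  qed
  have fs: "(\<Sum>X<m. f ?tau X) = 1" using rule tp unfolding is_rule_def by blast
  have sw: "SW (length ?tau) ?u X = 1 / real m" for X unfolding SW_def by simp
  have mx: "Max (SW (length ?tau) ?u ` {..<m}) = 1 / real m"
  proof -
    have "SW (length ?tau) ?u ` {..<m} = {1 / real m}" using mp sw by auto
    then show ?thesis by simp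
  qed
  have e: "(\<Sum>X<m. f ?tau X * SW (length ?tau) ?u X) = 1 / real m"
    using fs unfolding sw by (simp add: sum_divide_distrib[symmetric])
  have "ereal (Max (SW (length ?tau) ?u ` {..<m})) / ereal (\<Sum>X<m. f ?tau X * SW (length ?tau) ?u X) \<le> util_distortion m t f"
    unfolding util_distortion_def
    by (rule SUP_upper2[where i="(?tau, ?u)"]) (use tp uc in auto)
  moreover have "ereal (Max (SW (length ?tau) ?u ` {..<m})) / ereal (\<Sum>X<m. f ?tau X * SW (length ?tau) ?u X) = 1"
    unfolding mx e using mp by (simp add: ereal_divide)
  ultimately show ?thesis by simp
qed

theorem mainTheorem10:
  "\<exists>c>0. \<forall>m t (D::real) f.
     1 \<le> t \<longrightarrow> t \<le> m \<longrightarrow> D \<ge> 1 \<longrightarrow> is_rule m t f \<longrightarrow>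
     metric_distortion m t f \<le> ereal D \<longrightarrow>
     util_distortion m t f \<ge> ereal (c * (real m * sqrt (real m)) / (D * (real t * sqrt (real t))))"
proof (intro exI[of _ "1/156"] conjI allI impI)
  show "(1/156::real) > 0" by simp
  fix m t :: nat and D :: real and f :: "nat list list \<Rightarrow> nat \<Rightarrow> real"
  assume t1: "1 \<le> t" and tm: "t \<le> m" and D: "D \<ge> 1" and rule: "is_rule m t f"
    and md: "metric_distortion m t f \<le> ereal D"
  have Tp: "real t > 0" using t1 by simp
  show "util_distortion m t f \<ge> ereal (1/156 * (real m * sqrt (real m)) / (D * (real t * sqrt (real t))))"
  proof (cases "6*t \<le> m")
    case True
    define k where "k = m div (3*t)"
    define s where "s = sqrt (real m / real t)"
    define b where "b = nat \<lceil>s\<rceil>"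
    have k2: "k \<ge> 2"
    proof -
      have "(6*t) div (3*t) = 2" using t1 by simp
      then show ?thesis unfolding k_def using div_le_mono[OF True, of "3*t"] by simp
    qed
    have kle: "3*t*k \<le> m" unfolding k_def by (simp add: mult.commute)
    have klt: "m < 3*t*(k+1)"
    proof -
      have "m = 3*t*k + m mod (3*t)" unfolding k_def by simp
      moreover have "m mod (3*t) < 3*t" using t1 by simp
      ultimately show ?thesis by (simp add: algebra_simps)
    qed
    have hm: "2*k*t < m"
    proof -
      have kle': "3*(k*t) \<le> m" using kle by (metis mult.commute mult.assoc)
      have e: "2*k*t = 2*(k*t)" by simp
      have "m > 0" using True t1 by simp
      then show ?thesis using kle' e by linarith
    qed
    have s1: "s \<ge> 1" unfolding s_def using True Tp by (simp add: le_divide_eq)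
    have b1: "b \<ge> 1"
    proof -
      have "\<lceil>s\<rceil> \<ge> 1" using s1 by (simp add: le_ceiling_iff)
      then show ?thesis unfolding b_def by linarith
    qed
    have bs: "real b \<ge> s" unfolding b_def using s1 by (simp add: le_ceiling_iff)
    have bs2: "real b \<le> 2*s"
    proof -
      have "real b = of_int \<lceil>s\<rceil>" unfolding b_def using s1 by simp
      also have "\<dots> < s + 1" by linarith
      finally show ?thesis using s1 by simp
    qed
    have K: "real k \<ge> real m / (6 * real t)"
    proof -
      have a1: "3*t \<le> 3*t*k" using k2 by simp
      have a2: "3*t*(k+1) = 3*t*k + 3*t" by (simp add: algebra_simps)
      have a3: "6*t*k = 3*t*k + 3*t*k" by simp
      have "m \<le> 6*t*k" using klt a1 a2 a3 by linarith
      then have "real m \<le> 6 * real t * real k" by (metis of_nat_le_iff of_nat_mult of_nat_numeral)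
      then show ?thesis using Tp by (simp add: divide_le_eq mult.commute mult.left_commute)
    qed
    have W: "WW k t m \<ge> real m / 3"
    proof -
      have e1: "real (3*t*k) = 3*(real k * real t)" by simp
      have e2: "real (2*k*t) = 2*(real k * real t)" by simp
      have c1: "3*(real k * real t) \<le> real m" using kle e1 by (metis of_nat_le_iff)
      have c2: "real (m - 2*k*t) = real m - 2*(real k * real t)" using hm e2 by (simp add: of_nat_diff)
      have "WW k t m = real t + (real m - 2*(real k * real t))" unfolding WW_def c2 ..
      then show ?thesis using c1 Tp by linarith
    qed
    have "ereal (1/156 * (real m * sqrt (real m)) / (D * (real t * sqrt (real t))))
        \<le> ereal ((k / (real t + 1)) / (2 * b / WW k t m + D / (b * (real t + 1))))"
      using arith_main[of "real t" D "real m" "real k" "WW k t m" s "real b"] t1 D True K W s_def bs bs2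
      by simp
    also have "\<dots> \<le> util_distortion m t f"
      using util_main[of k b t m D f] k2 b1 t1 hm D rule md by simp
    finally show ?thesis .
  next
    case False
    have sq: "sqrt (real m) \<le> 3 * sqrt (real t)"
    proof -
      have "real m \<le> 9 * real t" using False by simp
      then have "sqrt (real m) \<le> sqrt (9 * real t)" by (rule real_sqrt_le_mono)
      also have "sqrt (9 * real t) = 3 * sqrt (real t)" by (simp add: real_sqrt_mult)
      finally show ?thesis .
    qed
    have mm: "real m * sqrt (real m) \<le> 18 * (real t * sqrt (real t))"
    proof -
      have "real m \<le> 6 * real t" using False by simp
      then have "real m * sqrt (real m) \<le> (6 * real t) * (3 * sqrt (real t))"
        using sq by (intro mult_mono) auto
      then show ?thesis by simp
    qed
    have pos: "real t * sqrt (real t) > 0" using Tp by simp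
    have "1/156 * (real m * sqrt (real m)) / (D * (real t * sqrt (real t)))
        \<le> 1/156 * (real m * sqrt (real m)) / (real t * sqrt (real t))"
    proof -
      have "1 * (real t * sqrt (real t)) \<le> D * (real t * sqrt (real t))" using D pos by (intro mult_right_mono) auto
      moreover have "0 \<le> 1/156 * (real m * sqrt (real m))" by simp
      ultimately show ?thesis using pos by (intro divide_left_mono) auto
    qed
    also have "\<dots> \<le> 1" using mm pos by (simp add: divide_le_eq)
    finally have "ereal (1/156 * (real m * sqrt (real m)) / (D * (real t * sqrt (real t)))) \<le> 1" by simp
    also have "1 \<le> util_distortion m t f" using util_ge1[OF t1 tm rule] .
    finally show ?thesis .
  qed
qed

end
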